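(* Let $f\in\operatorname{Lip}_1([0,1],\mathbb{R})$, $s<t\in[0,1]$, $\tau,\varepsilon\in(0,1)$, and suppose $f(t)-f(s)=t-s$. Then there exists $\delta>0$ such that for every $g\in\operatorname{Lip}_1([0,1],\mathbb{R})$ with $\|g-f\|_\infty\leq\delta$, the set $C=\{r\in[s,t]\colon g'(r)\text{ exists and } g'(r)\geq\tau\}$ has Lebesgue measure at least $(1-\varepsilon)(t-s)$.
   Context: $\operatorname{Lip}_1([0,1],\mathbb{R})$ is the set of functions $[0,1]\to\mathbb{R}$ with Lipschitz constant at most $1$, with the supremum metric. *)

theory Defs
  imports "HOL-Analysis.Analysis"
begin

text \<open>Lip_1([0,1],R): functions with Lipschitz constant at most 1 on [0,1].
  Functions are modelled as real \<Rightarrow> real; only values on [0,1] matter.\<close>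
definition Lip1 :: "(real \<Rightarrow> real) set" where
  "Lip1 = {f. 1-lipschitz_on {0..1} f}"

definition sup_dist01 :: "(real \<Rightarrow> real) \<Rightarrow> (real \<Rightarrow> real) \<Rightarrow> real" where
  "sup_dist01 g f = (SUP x\<in>{0..1}. \<bar>g x - f x\<bar>)"

end

theory Submission
  imports Defs
begin

lemma sum_cmp:
  fixes X :: "'i \<Rightarrow> 'a set" and c1 c2 :: ennreal
  assumes "countable I" "disjoint_family_on X I" "\<And>i. i\<in>I \<Longrightarrow> X i \<in> sets M1"
    "\<And>i. i\<in>I \<Longrightarrow> X i \<in> sets M2"
    "\<And>i. i\<in>I \<Longrightarrow> c1 * emeasure M1 (X i) \<le> c2 * emeasure M2 (X i)"
  shows "c1 * emeasure M1 (\<Union>(X ` I)) \<le> c2 * emeasure M2 (\<Union>(X ` I))"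
proof -
  have "c1 * emeasure M1 (\<Union>(X ` I)) = (\<integral>\<^sup>+i. c1 * emeasure M1 (X i) \<partial>count_space I)"
    by (simp add: emeasure_UN_countable assms nn_integral_cmult)
  also have "\<dots> \<le> (\<integral>\<^sup>+i. c2 * emeasure M2 (X i) \<partial>count_space I)"
    by (rule nn_integral_mono) (simp add: assms)
  also have "\<dots> = c2 * emeasure M2 (\<Union>(X ` I))"
    by (simp add: emeasure_UN_countable assms nn_integral_cmult)
  finally show ?thesis .
qed

lemma vitali_app:
  fixes S U :: "real set" and P :: "real \<Rightarrow> real \<Rightarrow> bool"
  assumes "\<And>x d. x \<in> S \<Longrightarrow> 0 < d \<Longrightarrow> \<exists>c r. 0 < r \<and> r < d \<and> x \<in> cball c r \<and> cball c r \<subseteq> U \<and> P c r"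
  obtains C where "countable C"
    "\<And>i. i \<in> C \<Longrightarrow> 0 < snd i \<and> cball (fst i) (snd i) \<subseteq> U \<and> P (fst i) (snd i)"
    "disjoint_family_on (\<lambda>i. cball (fst i) (snd i)) C"
    "negligible (S - (\<Union>i\<in>C. cball (fst i) (snd i)))"
proof -
  let ?K = "{i. 0 < snd i \<and> cball (fst i) (snd i) \<subseteq> U \<and> P (fst i) (snd i)}"
  have "\<exists>i. i \<in> ?K \<and> x \<in> cball (fst i) (snd i) \<and> snd i < d" if xd: "x \<in> S" "0 < d" for x d
  proof -
    obtain c r where "0 < r \<and> r < d \<and> x \<in> cball c r \<and> cball c r \<subseteq> U \<and> P c r"
      using assms[OF xd] by blast
    then show ?thesis by (intro exI[of _ "(c,r)"]) auto
  qed
  note cov = this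
  obtain C where C: "countable C" "C \<subseteq> ?K"
    "pairwise (\<lambda>i j. disjnt (cball (fst i) (snd i)) (cball (fst j) (snd j))) C"
    "negligible (S - (\<Union>i\<in>C. cball (fst i) (snd i)))"
    by (rule Vitali_covering_theorem_cballs[of ?K snd S fst]) (use cov in auto)
  show ?thesis
  proof (rule that[OF C(1) _ _ C(4)])
    show "\<And>i. i \<in> C \<Longrightarrow> 0 < snd i \<and> cball (fst i) (snd i) \<subseteq> U \<and> P (fst i) (snd i)"
      using C(2) by auto
    show "disjoint_family_on (\<lambda>i. cball (fst i) (snd i)) C"
      using C(3) unfolding disjoint_family_on_def pairwise_def disjnt_def by auto
  qed
qed

lemma small_cball_in_open:
  fixes U :: "real set"
  assumes "open U" "x \<in> U"
  obtains e where "e > 0" "\<And>c r. x \<in> cball c r \<Longrightarrow> r < e \<Longrightarrow> cball c r \<subseteq> U"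
proof -
  obtain e where e: "e > 0" "\<And>y. dist y x < e \<Longrightarrow> y \<in> U"
    using assms open_dist by metis
  show ?thesis
  proof (rule that[of "e/2"])
    show "e/2 > 0" using e by simp
    fix c r assume "x \<in> cball c r" "r < e/2"
    then show "cball c r \<subseteq> U"
      using e(2) by (auto simp: dist_real_def)
  qed
qed

lemma countable_negligible:
  fixes A :: "real set"
  assumes "countable A" shows "negligible A"
proof -
  have "A = (\<Union>x\<in>A. {x})" by auto
  also have "negligible \<dots>"
    by (rule negligible_countable_Union) (use assms in auto)
  finally show ?thesis .
qed

lemma borel_eq_lebesgue:
  "A \<in> sets borel \<Longrightarrow> emeasure lebesgue A = emeasure lborel (A::real set)"
  by (simp add: emeasure_completion)

lemma emeasure_cball_real: "0 \<le> r \<Longrightarrow> emeasure lebesgue (cball (c::real) r) = ennreal (2*r)"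
proof -
  assume "0 \<le> r"
  have "cball c r = {c-r..c+r}" by (auto simp: dist_real_def)
  then show ?thesis using \<open>0 \<le> r\<close> by (simp add: borel_eq_lebesgue emeasure_lborel_Icc)
qed

lemma imeasure_cball:
  fixes h :: "real \<Rightarrow> real"
  assumes "mono h" "continuous_on UNIV h" "0 \<le> r"
  shows "emeasure (interval_measure h) (cball c r) = ennreal (h (c+r) - h (c-r))"
  unfolding cball_eq_atLeastAtMost
  by (rule emeasure_interval_measure_Icc) (use assms in \<open>auto simp: mono_def\<close>)

lemma borel_imp_lebesgue: "A \<in> sets borel \<Longrightarrow> A \<in> sets lebesgue"
  by (simp add: sets_completionI_sets)

definition Qle :: "(real \<Rightarrow> real) \<Rightarrow> real \<Rightarrow> real \<Rightarrow> bool" where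
  "Qle h p x \<longleftrightarrow> (\<forall>d>0. \<exists>c r. 0 < r \<and> r < d \<and> x \<in> cball c r \<and> h (c+r) - h (c-r) \<le> p*(2*r))"

definition Qge :: "(real \<Rightarrow> real) \<Rightarrow> real \<Rightarrow> real \<Rightarrow> bool" where
  "Qge h q x \<longleftrightarrow> (\<forall>d>0. \<exists>c r. 0 < r \<and> r < d \<and> x \<in> cball c r \<and> h (c+r) - h (c-r) \<ge> q*(2*r))"

lemma cball_minus_ball_real:
  "cball (c::real) r - ball c r \<subseteq> {c - r, c + r}"
  by (auto simp: dist_real_def)

lemma cover_in_open:
  fixes U S :: "real set"
  assumes "open U" "S \<subseteq> U"
    and "\<And>x d. x \<in> S \<Longrightarrow> 0 < d \<Longrightarrow> \<exists>c r. 0 < r \<and> r < d \<and> x \<in> cball c r \<and> P c r"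
  shows "\<And>x d. x \<in> S \<Longrightarrow> 0 < d \<Longrightarrow> \<exists>c r. 0 < r \<and> r < d \<and> x \<in> cball c r \<and> cball c r \<subseteq> U \<and> P c r"
proof -
  fix x d assume xd: "x \<in> S" "0 < (d::real)"
  obtain e where e: "e > 0" "\<And>c r. x \<in> cball c r \<Longrightarrow> r < e \<Longrightarrow> cball c r \<subseteq> U"
    using small_cball_in_open[OF assms(1)] xd assms(2) by blast
  obtain c r where "0 < r" "r < min d e" "x \<in> cball c r" "P c r"
    using assms(3)[OF xd(1), of "min d e"] xd e by auto
  then show "\<exists>c r. 0 < r \<and> r < d \<and> x \<in> cball c r \<and> cball c r \<subseteq> U \<and> P c r"
    using e(2) by (intro exI[of _ c] exI[of _ r]) auto
qed

lemma union_cballs_borel: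
  "countable C \<Longrightarrow> (\<Union>i\<in>C. cball (fst i) (snd i)) \<in> sets (borel :: real measure)"
  by (intro sets.countable_UN') auto

lemma leb_step:
  fixes h :: "real \<Rightarrow> real"
  assumes mono: "mono h" and cont: "continuous_on UNIV h" and p: "0 \<le> p" "p < q"
    and S: "S \<subseteq> {a<..<b}" and SQ: "\<And>x. x \<in> S \<Longrightarrow> Qle h p x \<and> Qge h q x"
    and T: "S \<subseteq> T" "T \<in> lmeasurable" and eta: "\<eta> > 0"
  shows "\<exists>T'. S \<subseteq> T' \<and> T' \<in> lmeasurable \<and> q * measure lebesgue T' \<le> p * (measure lebesgue T + \<eta>)"
proof -
  define \<mu> where "\<mu> = interval_measure h"
  have sets_mu[simp]: "sets \<mu> = sets borel" by (simp add: \<mu>_def)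
  let ?T1 = "T \<inter> {a<..<b}"
  have T1: "?T1 \<in> lmeasurable" using T by (intro fmeasurable_Int_fmeasurable) auto
  obtain U0 where U0: "open U0" "?T1 \<subseteq> U0" "(U0 - ?T1) \<in> lmeasurable"
      "emeasure lebesgue (U0 - ?T1) < ennreal \<eta>"
    using sets_lebesgue_outer_open[of ?T1 \<eta>] T1 eta fmeasurableD by blast
  define U where "U = U0 \<inter> {a<..<b}"
  have Uopen: "open U" using U0 by (simp add: U_def open_Int)
  have SU: "S \<subseteq> U" using S T U0 by (auto simp: U_def)
  have Usets: "U \<in> sets lebesgue" using Uopen by (simp add: borel_imp_lebesgue)
  have Umeas: "emeasure lebesgue U \<le> ennreal (measure lebesgue T + \<eta>)"
  proof -
    have "emeasure lebesgue U \<le> emeasure lebesgue (?T1 \<union> (U0 - ?T1))"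
      by (rule emeasure_mono) (use T1 U0 in \<open>auto simp: U_def fmeasurable_def\<close>)
    also have "\<dots> \<le> emeasure lebesgue ?T1 + emeasure lebesgue (U0 - ?T1)"
      by (rule emeasure_subadditive) (use T1 U0 in \<open>auto simp: fmeasurable_def\<close>)
    also have "\<dots> \<le> ennreal (measure lebesgue T) + ennreal \<eta>"
    proof (rule add_mono)
      have "emeasure lebesgue ?T1 = ennreal (measure lebesgue ?T1)"
        using T1 by (simp add: emeasure_eq_measure2)
      also have "\<dots> \<le> ennreal (measure lebesgue T)"
        using T T1 by (intro ennreal_leI measure_mono_fmeasurable) (auto simp: fmeasurable_def)
      finally show "emeasure lebesgue ?T1 \<le> ennreal (measure lebesgue T)" .
      show "emeasure lebesgue (U0 - ?T1) \<le> ennreal \<eta>" using U0 by simp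
    qed
    also have "\<dots> = ennreal (measure lebesgue T + \<eta>)"
      using eta by (simp add: ennreal_plus)
    finally show ?thesis .
  qed
  have cov1: "\<exists>c r. 0 < r \<and> r < d \<and> x \<in> cball c r \<and> cball c r \<subseteq> U \<and> h (c+r) - h (c-r) \<le> p*(2*r)"
    if "x \<in> S" "0 < d" for x d
    by (rule cover_in_open[OF Uopen SU _ that]) (use SQ in \<open>auto simp: Qle_def\<close>)
  obtain C1 where C1: "countable C1"
    "\<And>i. i \<in> C1 \<Longrightarrow> 0 < snd i \<and> cball (fst i) (snd i) \<subseteq> U \<and> h (fst i + snd i) - h (fst i - snd i) \<le> p*(2 * snd i)"
    "disjoint_family_on (\<lambda>i. cball (fst i) (snd i)) C1"
    "negligible (S - (\<Union>i\<in>C1. cball (fst i) (snd i)))"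
    by (rule vitali_app[where P="\<lambda>c r. h (c+r) - h (c-r) \<le> p*(2*r)", OF cov1]) blast+
  define W1 where "W1 = (\<Union>i\<in>C1. cball (fst i) (snd i))"
  define V1 where "V1 = (\<Union>i\<in>C1. ball (fst i) (snd i))"
  have W1b: "W1 \<in> sets borel" unfolding W1_def using C1(1) by (rule union_cballs_borel)
  have V1open: "open V1" unfolding V1_def by auto
  have V1W1: "V1 \<subseteq> W1" unfolding V1_def W1_def by auto
  have W1U: "W1 \<subseteq> U" using C1(2) unfolding W1_def by auto
  have muW1: "1 * emeasure \<mu> W1 \<le> ennreal p * emeasure lebesgue W1"
    unfolding W1_def
  proof (rule sum_cmp[OF C1(1) C1(3)])
    fix i assume i: "i \<in> C1"
    have "1 * emeasure \<mu> (cball (fst i) (snd i)) = ennreal (h (fst i + snd i) - h (fst i - snd i))"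
      using C1(2)[OF i] mono cont by (simp add: \<mu>_def imeasure_cball)
    also have "\<dots> \<le> ennreal (p * (2 * snd i))" using C1(2)[OF i] by (intro ennreal_leI) auto
    also have "\<dots> = ennreal p * emeasure lebesgue (cball (fst i) (snd i))"
      using C1(2)[OF i] p by (subst emeasure_cball_real) (auto simp: ennreal_mult)
    finally show "1 * emeasure \<mu> (cball (fst i) (snd i)) \<le> ennreal p * emeasure lebesgue (cball (fst i) (snd i))" .
  qed (auto simp: borel_imp_lebesgue)
  have negV1: "negligible (S - V1)"
  proof -
    have "W1 - V1 \<subseteq> (\<Union>i\<in>C1. {fst i - snd i, fst i + snd i})"
      unfolding W1_def V1_def using cball_minus_ball_real by blast
    moreover have "countable (\<Union>i\<in>C1. {fst i - snd i, fst i + snd i})"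
      using C1(1) by auto
    ultimately have "negligible (W1 - V1)"
      using countable_negligible countable_subset by blast
    moreover have "S - V1 \<subseteq> (S - W1) \<union> (W1 - V1)" by auto
    ultimately show ?thesis using C1(4) unfolding W1_def
      by (meson negligible_Un negligible_subset)
  qed
  have cov2: "\<exists>c r. 0 < r \<and> r < d \<and> x \<in> cball c r \<and> cball c r \<subseteq> V1 \<and> h (c+r) - h (c-r) \<ge> q*(2*r)"
    if "x \<in> S \<inter> V1" "0 < d" for x d
    by (rule cover_in_open[OF V1open _ _ that]) (use SQ in \<open>auto simp: Qge_def\<close>)
  obtain C2 where C2: "countable C2"
    "\<And>i. i \<in> C2 \<Longrightarrow> 0 < snd i \<and> cball (fst i) (snd i) \<subseteq> V1 \<and> h (fst i + snd i) - h (fst i - snd i) \<ge> q*(2 * snd i)"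
    "disjoint_family_on (\<lambda>i. cball (fst i) (snd i)) C2"
    "negligible (S \<inter> V1 - (\<Union>i\<in>C2. cball (fst i) (snd i)))"
    by (rule vitali_app[where P="\<lambda>c r. h (c+r) - h (c-r) \<ge> q*(2*r)", OF cov2]) blast+
  define W2 where "W2 = (\<Union>i\<in>C2. cball (fst i) (snd i))"
  have W2b: "W2 \<in> sets borel" unfolding W2_def using C2(1) by (rule union_cballs_borel)
  have W2V1: "W2 \<subseteq> V1" using C2(2) unfolding W2_def by auto
  have muW2: "ennreal q * emeasure lebesgue W2 \<le> 1 * emeasure \<mu> W2"
    unfolding W2_def
  proof (rule sum_cmp[OF C2(1) C2(3)])
    fix i assume i: "i \<in> C2"
    have "ennreal q * emeasure lebesgue (cball (fst i) (snd i)) = ennreal (q * (2 * snd i))"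
      using C2(2)[OF i] p by (subst emeasure_cball_real) (auto simp: ennreal_mult)
    also have "\<dots> \<le> ennreal (h (fst i + snd i) - h (fst i - snd i))"
      using C2(2)[OF i] by (intro ennreal_leI) auto
    also have "\<dots> = 1 * emeasure \<mu> (cball (fst i) (snd i))"
      using C2(2)[OF i] mono cont by (simp add: \<mu>_def imeasure_cball)
    finally show "ennreal q * emeasure lebesgue (cball (fst i) (snd i)) \<le> 1 * emeasure \<mu> (cball (fst i) (snd i))" .
  qed (auto simp: borel_imp_lebesgue)
  have chain: "ennreal q * emeasure lebesgue W2 \<le> ennreal (p * (measure lebesgue T + \<eta>))"
  proof -
    have "ennreal q * emeasure lebesgue W2 \<le> emeasure \<mu> W2" using muW2 by simp
    also have "\<dots> \<le> emeasure \<mu> W1"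
      using W2V1 V1W1 W1b by (intro emeasure_mono) auto
    also have "\<dots> \<le> ennreal p * emeasure lebesgue W1" using muW1 by simp
    also have "\<dots> \<le> ennreal p * emeasure lebesgue U"
      using W1U Usets by (intro mult_left_mono emeasure_mono) auto
    also have "\<dots> \<le> ennreal p * ennreal (measure lebesgue T + \<eta>)"
      using Umeas by (intro mult_left_mono) auto
    also have "\<dots> = ennreal (p * (measure lebesgue T + \<eta>))"
      using p eta measure_nonneg[of lebesgue T] by (simp add: ennreal_mult)
    finally show ?thesis .
  qed
  define N where "N = (S \<inter> V1 - W2) \<union> (S - V1)"
  have negN: "negligible N" unfolding N_def W2_def using C2(4) negV1 by (rule negligible_Un)
  have W2lm: "W2 \<in> lmeasurable"
  proof (rule bounded_set_imp_lmeasurable)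
    have "W2 \<subseteq> {a..b}" using W2V1 V1W1 W1U unfolding U_def by fastforce
    then show "bounded W2"
      by (rule bounded_subset[OF compact_imp_bounded[OF compact_Icc]])
    show "W2 \<in> sets lebesgue" using W2b by (rule borel_imp_lebesgue)
  qed
  define T' where "T' = W2 \<union> N"
  have ST': "S \<subseteq> T'" unfolding T'_def N_def by auto
  have mT': "measure lebesgue T' = measure lebesgue W2"
    unfolding T'_def using W2lm negN
    by (simp add: measure_Un_null_set fmeasurable_def negligible_iff_null_sets)
  have T'lm: "T' \<in> lmeasurable"
    unfolding T'_def using W2lm negN by (simp add: fmeasurable.Un negligible_imp_measurable)
  have "ennreal (q * measure lebesgue W2) \<le> ennreal (p * (measure lebesgue T + \<eta>))"
    using chain W2lm p by (simp add: emeasure_eq_measure2 ennreal_mult)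
  then have "q * measure lebesgue W2 \<le> p * (measure lebesgue T + \<eta>)"
    using p eta T by (subst (asm) ennreal_le_iff) auto
  then show ?thesis using ST' T'lm mT' by auto
qed

lemma leb_core:
  fixes h :: "real \<Rightarrow> real"
  assumes mono: "mono h" and cont: "continuous_on UNIV h" and p: "0 \<le> p" "p < q"
    and S: "S \<subseteq> {a<..<b}" and SQ: "\<And>x. x \<in> S \<Longrightarrow> Qle h p x \<and> Qge h q x"
  shows "negligible S"
proof -
  define M where "M = measure lebesgue ` {T. S \<subseteq> T \<and> T \<in> lmeasurable}"
  have "{a<..<b} \<in> lmeasurable"
    by (rule bounded_set_imp_lmeasurable) (auto intro: borel_imp_lebesgue bounded_subset[OF compact_imp_bounded[OF compact_Icc], of _ a b])
  then have Mne: "M \<noteq> {}" using S unfolding M_def by blast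
  have Mbdd: "bdd_below M" unfolding M_def by (rule bdd_belowI[of _ 0]) auto
  define m where "m = Inf M"
  have m0: "0 \<le> m" unfolding m_def using Mne by (rule cInf_greatest) (auto simp: M_def)
  have key: "q * m \<le> p * m + 2 * p * \<eta>" if eta: "\<eta> > 0" for \<eta>
  proof -
    obtain z where z: "z \<in> M" "z < m + \<eta>" using cInf_lessD[OF Mne, of "m + \<eta>"] eta by (auto simp: m_def)
    then obtain T where T: "S \<subseteq> T" "T \<in> lmeasurable" "measure lebesgue T < m + \<eta>"
      unfolding M_def by auto
    obtain T' where T': "S \<subseteq> T'" "T' \<in> lmeasurable" "q * measure lebesgue T' \<le> p * (measure lebesgue T + \<eta>)"
      using leb_step[OF mono cont p S SQ T(1,2) eta] by blast
    have "m \<le> measure lebesgue T'" unfolding m_def using T' Mbdd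
      by (intro cInf_lower) (auto simp: M_def)
    then have "q * m \<le> q * measure lebesgue T'" using p by (intro mult_left_mono) auto
    also have "\<dots> \<le> p * (measure lebesgue T + \<eta>)" by (rule T'(3))
    also have "\<dots> \<le> p * (m + 2 * \<eta>)" using T(3) p by (intro mult_left_mono) auto
    finally show ?thesis by (simp add: algebra_simps)
  qed
  have "q * m \<le> p * m"
  proof (rule field_le_epsilon)
    fix e :: real assume e: "0 < e"
    have "q * m \<le> p * m + 2 * p * (e / (2 * p + 1))" using key[of "e / (2*p+1)"] e p by auto
    also have "2 * p * (e / (2 * p + 1)) \<le> e" using e p by (simp add: field_simps)
    finally show "q * m \<le> p * m + e" by simp
  qed
  then have "(q - p) * m \<le> 0" by (simp add: algebra_simps)
  then have "m = 0" using m0 p by (simp add: mult_le_0_iff)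
  show ?thesis unfolding negligible_outer
  proof (intro allI impI)
    fix e :: real assume "e > 0"
    then obtain z where "z \<in> M" "z < e" using cInf_lessD[OF Mne, of e] \<open>m = 0\<close> by (auto simp: m_def)
    then show "\<exists>T. S \<subseteq> T \<and> T \<in> lmeasurable \<and> measure lebesgue T < e" unfolding M_def by auto
  qed
qed

lemma der_exists:
  fixes h :: "real \<Rightarrow> real"
  assumes mono: "mono h" and lip: "\<And>x y. x \<le> y \<Longrightarrow> h y - h x \<le> 2*(y-x)"
    and nE: "\<And>p q. p \<in> \<rat> \<Longrightarrow> q \<in> \<rat> \<Longrightarrow> 0 \<le> p \<Longrightarrow> p < q \<Longrightarrow> \<not> (Qle h p x \<and> Qge h q x)"
  shows "\<exists>D. (h has_real_derivative D) (at x)"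
proof -
  define A where "A = {p \<in> \<rat>. \<exists>d>0. \<forall>c r. 0 < r \<and> r < d \<and> x \<in> cball c r \<longrightarrow> h (c+r) - h (c-r) > p*(2*r)}"
  have neg_in_A: "p \<in> A" if "p \<in> \<rat>" "p < 0" for p
  proof -
    have "h (c+r) - h (c-r) > p*(2*r)" if "0 < r" for c r
    proof -
      have "h (c-r) \<le> h (c+r)" using mono \<open>0 < r\<close> by (auto simp: mono_def)
      moreover have "p*(2*r) < 0" using \<open>p < 0\<close> \<open>0 < r\<close> by (simp add: mult_neg_pos)
      ultimately show ?thesis by linarith
    qed
    then show ?thesis unfolding A_def using that by (auto intro: exI[of _ 1])
  qed
  have Aone: "-1 \<in> A" by (rule neg_in_A) auto
  have Ane: "A \<noteq> {}" using Aone by blast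
  have A2: "p < 2" if pA: "p \<in> A" for p
  proof -
    obtain d where d: "d > 0" "\<And>c r. 0 < r \<and> r < d \<and> x \<in> cball c r \<Longrightarrow> h (c+r) - h (c-r) > p*(2*r)"
      using pA unfolding A_def by blast
    have "h (x + d/2) - h (x - d/2) > p*(2*(d/2))" using d(2)[of "d/2" x] d(1) by auto
    moreover have "h (x + d/2) - h (x - d/2) \<le> 2*((x + d/2) - (x - d/2))" using lip[of "x - d/2" "x + d/2"] d(1) by auto
    ultimately have "p * d < 2 * d" by simp
    then show ?thesis using d by simp
  qed
  have Abdd: "bdd_above A" using A2 by (intro bdd_aboveI[of _ 2]) force
  define c0 where "c0 = Sup A"
  have c0pos: "0 \<le> c0"
  proof (rule ccontr)
    assume "\<not> 0 \<le> c0"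
    then obtain p where "p \<in> \<rat>" "c0 < p" "p < 0" using Rats_dense_in_real[of c0 0] by auto
    then have "p \<in> A" by (intro neg_in_A)
    then have "p \<le> c0" unfolding c0_def using Abdd by (rule cSup_upper)
    with \<open>c0 < p\<close> show False by simp
  qed
  have close: "\<exists>d>0. \<forall>c r. 0 < r \<and> r < d \<and> x \<in> cball c r \<longrightarrow> \<bar>(h (c+r) - h (c-r)) / (2*r) - c0\<bar> < \<eta>"
    if eta: "\<eta> > 0" for \<eta>
  proof -
    obtain p where p: "p \<in> A" "c0 - \<eta> < p"
      using less_cSup_iff[OF Ane Abdd, of "c0 - \<eta>"] eta by (auto simp: c0_def)
    obtain d1 where d1: "d1 > 0" "\<And>c r. 0 < r \<and> r < d1 \<and> x \<in> cball c r \<Longrightarrow> h (c+r) - h (c-r) > p*(2*r)"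
      using p(1) unfolding A_def by blast
    obtain p' where p': "p' \<in> \<rat>" "c0 < p'" "p' < c0 + \<eta>" using Rats_dense_in_real[of c0 "c0 + \<eta>"] eta by auto
    obtain q' where q': "q' \<in> \<rat>" "p' < q'" "q' < c0 + \<eta>" using Rats_dense_in_real[of p' "c0 + \<eta>"] p' by auto
    have "p' \<notin> A"
    proof
      assume "p' \<in> A"
      then have "p' \<le> c0" unfolding c0_def using Abdd by (rule cSup_upper)
      with p' show False by simp
    qed
    then have "Qle h p' x" using p'(1) unfolding A_def Qle_def by (auto simp: not_less) (meson not_le)
    then have "\<not> Qge h q' x" using nE[OF p'(1) q'(1) _ q'(2)] p' c0pos by auto
    then obtain d2 where d2: "d2 > 0" "\<And>c r. 0 < r \<and> r < d2 \<and> x \<in> cball c r \<Longrightarrow> h (c+r) - h (c-r) < q'*(2*r)"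
      unfolding Qge_def by (auto simp: not_le) (meson not_le)
    show ?thesis
    proof (intro exI[of _ "min d1 d2"] conjI allI impI)
      show "min d1 d2 > 0" using d1 d2 by simp
      fix c r assume cr: "0 < r \<and> r < min d1 d2 \<and> x \<in> cball c r"
      have lo: "p*(2*r) < h (c+r) - h (c-r)" using d1(2) cr by auto
      have hi: "h (c+r) - h (c-r) < q'*(2*r)" using d2(2) cr by auto
      have "p < (h (c+r) - h (c-r)) / (2*r)" using lo cr by (simp add: field_simps)
      moreover have "(h (c+r) - h (c-r)) / (2*r) < q'" using hi cr by (simp add: field_simps)
      ultimately show "\<bar>(h (c+r) - h (c-r)) / (2*r) - c0\<bar> < \<eta>" using p q' by auto
    qed
  qed
  have "(h has_real_derivative c0) (at x)"
    unfolding DERIV_def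
  proof (rule LIM_I)
    fix \<eta> :: real assume "\<eta> > 0"
    then obtain d where d: "d > 0" "\<And>c r. 0 < r \<and> r < d \<and> x \<in> cball c r \<Longrightarrow> \<bar>(h (c+r) - h (c-r)) / (2*r) - c0\<bar> < \<eta>"
      using close by blast
    show "\<exists>s>0. \<forall>k. k \<noteq> 0 \<and> norm (k - 0) < s \<longrightarrow> norm ((h (x + k) - h x) / k - c0) < \<eta>"
    proof (intro exI[of _ d] conjI allI impI)
      show "d > 0" by (rule d(1))
      fix k :: real assume k: "k \<noteq> 0 \<and> norm (k - 0) < d"
      show "norm ((h (x + k) - h x) / k - c0) < \<eta>"
      proof (cases "k > 0")
        case True
        have "\<bar>(h ((x + k/2) + k/2) - h ((x + k/2) - k/2)) / (2*(k/2)) - c0\<bar> < \<eta>"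
          using d(2)[of "k/2" "x + k/2"] k True by (auto simp: dist_real_def)
        then show ?thesis by (simp add: add.commute)
      next
        case False
        then have kneg: "k < 0" using k by simp
        have "\<bar>(h ((x + k/2) + (-k/2)) - h ((x + k/2) - (-k/2))) / (2*(-k/2)) - c0\<bar> < \<eta>"
          using d(2)[of "-k/2" "x + k/2"] k kneg by (auto simp: dist_real_def)
        moreover have "(h ((x + k/2) + (-k/2)) - h ((x + k/2) - (-k/2))) / (2*(-k/2)) = (h (x + k) - h x) / k"
        proof -
          have e1: "(x + k/2) + (-k/2) = x" and e2: "(x + k/2) - (-k/2) = x + k" and e3: "2*(-k/2) = -k" by simp_all
          show ?thesis unfolding e1 e2 e3 using kneg by (simp add: field_simps)
        qed
        ultimately show ?thesis by (simp add: add.commute)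
      qed
    qed
  qed
  then show ?thesis by blast
qed

lemma lip2_cont:
  fixes h :: "real \<Rightarrow> real"
  assumes mono: "mono h" and lip: "\<And>x y. x \<le> y \<Longrightarrow> h y - h x \<le> 2*(y-x)"
  shows "continuous_on UNIV h"
proof -
  have "2-lipschitz_on UNIV h"
  proof (rule lipschitz_onI)
    fix x y :: real
    show "dist (h x) (h y) \<le> 2 * dist x y"
    proof (cases "x \<le> y")
      case True
      then show ?thesis using lip[OF True] mono[unfolded mono_def, rule_format, OF True]
        by (simp add: dist_real_def)
    next
      case False
      then have "y \<le> x" by simp
      then show ?thesis using lip[OF \<open>y \<le> x\<close>] mono[unfolded mono_def, rule_format, OF \<open>y \<le> x\<close>]
        by (simp add: dist_real_def)
    qed
  qed simp
  then show ?thesis by (rule lipschitz_on_continuous_on)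
qed

lemma leb_diff:
  fixes h :: "real \<Rightarrow> real"
  assumes mono: "mono h" and lip: "\<And>x y. x \<le> y \<Longrightarrow> h y - h x \<le> 2*(y-x)"
  shows "negligible {x \<in> {a<..<b}. \<not> (\<exists>D. (h has_real_derivative D) (at x))}"
proof -
  have cont: "continuous_on UNIV h" using mono lip by (rule lip2_cont)
  define F where "F = (\<lambda>pq. {x \<in> {a<..<b}. 0 \<le> fst pq \<and> fst pq < snd pq \<and> Qle h (fst pq) x \<and> Qge h (snd pq) x})"
  have sub: "{x \<in> {a<..<b}. \<not> (\<exists>D. (h has_real_derivative D) (at x))} \<subseteq> \<Union>(F ` (\<rat> \<times> \<rat>))"
  proof
    fix x assume x: "x \<in> {x \<in> {a<..<b}. \<not> (\<exists>D. (h has_real_derivative D) (at x))}"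
    then have "\<not> (\<forall>p q. p \<in> \<rat> \<longrightarrow> q \<in> \<rat> \<longrightarrow> 0 \<le> p \<longrightarrow> p < q \<longrightarrow> \<not> (Qle h p x \<and> Qge h q x))"
      using der_exists[OF mono lip] by blast
    then obtain p q where "p \<in> \<rat>" "q \<in> \<rat>" "0 \<le> p" "p < q" "Qle h p x" "Qge h q x" by blast
    then show "x \<in> \<Union>(F ` (\<rat> \<times> \<rat>))" using x unfolding F_def by (auto intro!: bexI[of _ "(p,q)"])
  qed
  have "negligible (\<Union>(F ` (\<rat> \<times> \<rat>)))"
  proof (rule negligible_countable_Union)
    show "countable (F ` (\<rat> \<times> \<rat>))" using countable_rat by auto
    fix X assume "X \<in> F ` (\<rat> \<times> \<rat>)"
    then obtain p q where X: "X = F (p, q)" by auto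
    show "negligible X"
    proof (cases "0 \<le> p \<and> p < q")
      case True
      show ?thesis unfolding X
        by (rule leb_core[OF mono cont, of p q _ a b]) (use True in \<open>auto simp: F_def\<close>)
    next
      case False
      then have "X = {}" unfolding X F_def by auto
      then show ?thesis by simp
    qed
  qed
  then show ?thesis using sub negligible_subset by blast
qed

lemma G_borel:
  fixes h :: "real \<Rightarrow> real"
  assumes [measurable]: "h \<in> borel_measurable borel"
  shows "{r \<in> {s<..<t}. \<forall>k::nat. \<exists>m::nat. \<forall>n\<ge>m. (h (r + inverse (real (Suc n))) - h r) / inverse (real (Suc n)) \<le> q + inverse (real (Suc k))} \<in> sets borel"
  by measurable

theorem lemma6p3:
  fixes f :: "real \<Rightarrow> real" and s t \<tau> \<epsilon> :: real
  assumes "f \<in> Lip1"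
    and "0 \<le> s" and "s < t" and "t \<le> 1"
    and "0 < \<tau>" and "\<tau> < 1" and "0 < \<epsilon>" and "\<epsilon> < 1"
    and "f t - f s = t - s"
  shows "\<exists>\<delta>>0. \<forall>g\<in>Lip1. sup_dist01 g f \<le> \<delta> \<longrightarrow>
           (let C = {r\<in>{s..t}. \<exists>D. (g has_real_derivative D) (at r within {0..1}) \<and> D \<ge> \<tau>}
            in C \<in> sets lebesgue \<and> emeasure lebesgue C \<ge> ennreal ((1 - \<epsilon>) * (t - s)))"
proof -
  note fL = assms(1) and st = assms(2-4) and tau = assms(5,6) and eps = assms(7,8) and fst = assms(9)
  define q where "q = 1 - \<tau>"
  have q: "0 < q" using tau by (simp add: q_def)
  define \<delta> where "\<delta> = \<epsilon> * (t - s) * q / 2"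
  have \<delta>pos: "\<delta> > 0" using eps st q by (simp add: \<delta>_def)
  show ?thesis
  proof (intro exI[of _ \<delta>] conjI ballI impI)
    show "\<delta> > 0" by (rule \<delta>pos)
    fix g assume gL: "g \<in> Lip1" and gd: "sup_dist01 g f \<le> \<delta>"
    have glip: "\<bar>g x - g y\<bar> \<le> \<bar>x - y\<bar>" if "x \<in> {0..1}" "y \<in> {0..1}" for x y
      using lipschitz_onD[of 1 "{0..1}" g x y] gL that by (auto simp: Lip1_def dist_real_def)
    have flip: "\<bar>f x - f y\<bar> \<le> \<bar>x - y\<bar>" if "x \<in> {0..1}" "y \<in> {0..1}" for x y
      using lipschitz_onD[of 1 "{0..1}" f x y] fL that by (auto simp: Lip1_def dist_real_def)
    have bnd: "\<bar>g x - f x\<bar> \<le> \<delta>" if x: "x \<in> {0..1}" for x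
    proof -
      have "bdd_above ((\<lambda>x. \<bar>g x - f x\<bar>) ` {0..1})"
      proof (rule bdd_aboveI2)
        fix y :: real assume y: "y \<in> {0..1}"
        have "\<bar>g y - f y\<bar> \<le> \<bar>g 0 - f 0\<bar> + \<bar>g y - g 0\<bar> + \<bar>f y - f 0\<bar>" by linarith
        also have "\<dots> \<le> \<bar>g 0 - f 0\<bar> + 1 + 1"
          using glip[OF y, of 0] flip[OF y, of 0] y by auto
        finally show "\<bar>g y - f y\<bar> \<le> \<bar>g 0 - f 0\<bar> + 2" by simp
      qed
      then have "\<bar>g x - f x\<bar> \<le> sup_dist01 g f" unfolding sup_dist01_def using x
        by (intro cSUP_upper)
      with gd show ?thesis by simp
    qed
    have gts: "g t - g s \<ge> (t - s) - 2*\<delta>" using bnd[of s] bnd[of t] st fst by auto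
    define cl where "cl = (\<lambda>x::real. max 0 (min 1 x))"
    define h where "h = (\<lambda>x. cl x - g (cl x))"
    have cl01: "cl x \<in> {0..1}" for x by (simp add: cl_def)
    have clmono: "cl x \<le> cl y" if "x \<le> y" for x y using that by (simp add: cl_def)
    have cllip: "cl y - cl x \<le> y - x" if "x \<le> y" for x y using that by (simp add: cl_def)
    have clid: "cl x = x" if "x \<in> {0..1}" for x using that by (simp add: cl_def)
    have h_eq: "h y = y - g y" if "y \<in> {0..1}" for y using that clid by (simp add: h_def)
    have gdiff: "g (cl y) - g (cl x) \<le> cl y - cl x" if "x \<le> y" for x y
      using glip[OF cl01 cl01, of y x] clmono[OF that] by auto
    have hmono: "mono h"
    proof (rule monoI)
      fix x y :: real assume "x \<le> y"
      then show "h x \<le> h y" using gdiff[of x y] by (simp add: h_def)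
    qed
    have hlip: "h y - h x \<le> 2*(y-x)" if "x \<le> y" for x y
    proof -
      have "- (g (cl y) - g (cl x)) \<le> cl y - cl x"
        using glip[OF cl01 cl01, of y x] clmono[OF that] by auto
      then show ?thesis using cllip[OF that] by (simp add: h_def)
    qed
    have hcont: "continuous_on UNIV h" using hmono hlip by (rule lip2_cont)
    have hmeas: "h \<in> borel_measurable borel" using hcont by (rule borel_measurable_continuous_onI)
    have s01: "s \<in> {0..1}" and t01: "t \<in> {0..1}" using st by auto
    have hst: "h t - h s \<le> 2*\<delta>" using h_eq[OF s01] h_eq[OF t01] gts by simp
    have in01: "r \<in> {0<..<1}" if "r \<in> {s<..<t}" for r using that st by auto
    have toh: "(h has_real_derivative (1 - D)) (at r)"
      if r: "r \<in> {s<..<t}" and gD: "(g has_real_derivative D) (at r within {0..1})" for r D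
    proof -
      have "at r within {0..1} = at r"
        using in01[OF r] by (intro at_within_interior) (simp add: interior_atLeastAtMost_real)
      then have "(g has_real_derivative D) (at r)" using gD by simp
      then have "((\<lambda>y. y - g y) has_real_derivative (1 - D)) (at r)"
        by (intro DERIV_diff DERIV_ident)
      then show ?thesis
        by (rule has_field_derivative_transform_within_open[of _ _ _ "{0<..<1}"]) (use in01[OF r] h_eq in auto)
    qed
    have tog: "(g has_real_derivative (1 - D)) (at r within {0..1})"
      if r: "r \<in> {s<..<t}" and hD: "(h has_real_derivative D) (at r)" for r D
    proof -
      have "((\<lambda>y. y - h y) has_real_derivative (1 - D)) (at r)" using hD
        by (intro DERIV_diff DERIV_ident)
      then have "(g has_real_derivative (1 - D)) (at r)"
        by (rule has_field_derivative_transform_within_open[of _ _ _ "{0<..<1}"]) (use in01[OF r] h_eq in auto)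
      then show ?thesis by (rule has_field_derivative_at_within)
    qed
    define C where "C = {r\<in>{s..t}. \<exists>D. (g has_real_derivative D) (at r within {0..1}) \<and> D \<ge> \<tau>}"
    define C0 where "C0 = {r\<in>{s<..<t}. \<exists>D. (h has_real_derivative D) (at r) \<and> D \<le> q}"
    have C_mid: "C \<inter> {s<..<t} = C0"
    proof
      show "C \<inter> {s<..<t} \<subseteq> C0"
      proof
        fix r assume "r \<in> C \<inter> {s<..<t}"
        then obtain D where r: "r \<in> {s<..<t}" "(g has_real_derivative D) (at r within {0..1})" "D \<ge> \<tau>"
          unfolding C_def by auto
        then show "r \<in> C0" using toh[OF r(1,2)] unfolding C0_def q_def by auto
      qed
      show "C0 \<subseteq> C \<inter> {s<..<t}"
      proof
        fix r assume "r \<in> C0"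
        then obtain D where r: "r \<in> {s<..<t}" "(h has_real_derivative D) (at r)" "D \<le> q"
          unfolding C0_def by auto
        then show "r \<in> C \<inter> {s<..<t}" using tog[OF r(1,2)] unfolding C_def q_def by force
      qed
    qed
    define N where "N = {x \<in> {s<..<t}. \<not> (\<exists>D. (h has_real_derivative D) (at x))}"
    have negN: "negligible N" unfolding N_def using hmono hlip by (rule leb_diff)
    define B where "B = {r\<in>{s<..<t}. \<exists>D. (h has_real_derivative D) (at r) \<and> D > q}"
    have covB: "\<exists>c r. 0 < r \<and> r < d \<and> x \<in> cball c r \<and> q*(2*r) \<le> h (c+r) - h (c-r)"
      if x: "x \<in> B" and d: "0 < d" for x d
    proof -
      obtain D where D: "(h has_real_derivative D) (at x)" "D > q" using x unfolding B_def by auto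
      obtain e where e: "e > 0" "\<And>k. k \<noteq> 0 \<and> norm (k - 0) < e \<Longrightarrow> norm ((h (x + k) - h x) / k - D) < D - q"
        using LIM_D[OF D(1)[unfolded DERIV_def], of "D - q"] D(2) by auto
      define k where "k = min d e / 2"
      have k: "0 < k" "k < e" "k < d" using d e by (auto simp: k_def)
      have "\<bar>(h (x + k) - h x) / k - D\<bar> < D - q" using e(2)[of k] k by auto
      then have "q < (h (x + k) - h x) / k" by linarith
      then have hk: "q * k < h (x + k) - h x" using k by (simp add: field_simps)
      have e1: "(x + k/2) + k/2 = x + k" and e2: "(x + k/2) - k/2 = x" and e3: "2*(k/2) = k" by simp_all
      show ?thesis
        by (intro exI[of _ "x + k/2"] exI[of _ "k/2"]) (use k hk in \<open>auto simp: e1 e2 e3 dist_real_def\<close>)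
    qed
    have covB': "\<exists>c r. 0 < r \<and> r < d \<and> x \<in> cball c r \<and> cball c r \<subseteq> {s<..<t} \<and> q*(2*r) \<le> h (c+r) - h (c-r)"
      if "x \<in> B" "0 < d" for x d
      by (rule cover_in_open[OF _ _ covB that]) (auto simp: B_def)
    obtain CB where CB: "countable CB"
      "\<And>i. i \<in> CB \<Longrightarrow> 0 < snd i \<and> cball (fst i) (snd i) \<subseteq> {s<..<t} \<and> q*(2 * snd i) \<le> h (fst i + snd i) - h (fst i - snd i)"
      "disjoint_family_on (\<lambda>i. cball (fst i) (snd i)) CB"
      "negligible (B - (\<Union>i\<in>CB. cball (fst i) (snd i)))"
      by (rule vitali_app[where P="\<lambda>c r. q*(2*r) \<le> h (c+r) - h (c-r)", OF covB']) blast+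
    define W where "W = (\<Union>i\<in>CB. cball (fst i) (snd i))"
    have Wb: "W \<in> sets borel" unfolding W_def using CB(1) by (rule union_cballs_borel)
    have Wst: "W \<subseteq> {s<..<t}" using CB(2) unfolding W_def by auto
    define \<mu> where "\<mu> = interval_measure h"
    have muW: "ennreal q * emeasure lebesgue W \<le> 1 * emeasure \<mu> W"
      unfolding W_def
    proof (rule sum_cmp[OF CB(1) CB(3)])
      fix i assume i: "i \<in> CB"
      have "ennreal q * emeasure lebesgue (cball (fst i) (snd i)) = ennreal (q * (2 * snd i))"
        using CB(2)[OF i] q by (subst emeasure_cball_real) (auto simp: ennreal_mult)
      also have "\<dots> \<le> ennreal (h (fst i + snd i) - h (fst i - snd i))"
        using CB(2)[OF i] by (intro ennreal_leI) auto
      also have "\<dots> = 1 * emeasure \<mu> (cball (fst i) (snd i))"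
        using CB(2)[OF i] hmono hcont by (simp add: \<mu>_def imeasure_cball)
      finally show "ennreal q * emeasure lebesgue (cball (fst i) (snd i)) \<le> 1 * emeasure \<mu> (cball (fst i) (snd i))" .
    qed (auto simp: borel_imp_lebesgue \<mu>_def)
    have "emeasure \<mu> W \<le> emeasure \<mu> {s..t}"
      using Wst by (intro emeasure_mono) (auto simp: \<mu>_def)
    also have "\<dots> = ennreal (h t - h s)"
      unfolding \<mu>_def using st hmono hcont by (intro emeasure_interval_measure_Icc) (auto simp: mono_def)
    also have "\<dots> \<le> ennreal (2*\<delta>)" using hst by (intro ennreal_leI)
    finally have muW2: "emeasure \<mu> W \<le> ennreal (2*\<delta>)" .
    have Wlm: "W \<in> lmeasurable"
    proof (rule bounded_set_imp_lmeasurable)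
      have "W \<subseteq> {s..t}" using Wst by auto
      then show "bounded W" by (rule bounded_subset[OF compact_imp_bounded[OF compact_Icc]])
      show "W \<in> sets lebesgue" using Wb by (rule borel_imp_lebesgue)
    qed
    have "ennreal (q * measure lebesgue W) \<le> ennreal (2*\<delta>)"
      using muW muW2 Wlm q by (simp add: emeasure_eq_measure2 ennreal_mult)
    then have "q * measure lebesgue W \<le> 2*\<delta>" using \<delta>pos by (subst (asm) ennreal_le_iff) auto
    then have "q * measure lebesgue W \<le> q * (\<epsilon> * (t - s))"
    proof -
      have "2*\<delta> = q * (\<epsilon> * (t - s))" unfolding \<delta>_def by simp
      then show ?thesis using \<open>q * measure lebesgue W \<le> 2*\<delta>\<close> by linarith
    qed
    then have mW: "measure lebesgue W \<le> \<epsilon> * (t - s)"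
      using q by (rule mult_left_le_imp_le)
    define G where "G = {r \<in> {s<..<t}. \<forall>k::nat. \<exists>m::nat. \<forall>n\<ge>m. (h (r + inverse (real (Suc n))) - h r) / inverse (real (Suc n)) \<le> q + inverse (real (Suc k))}"
    have Gb: "G \<in> sets borel" unfolding G_def using hmeas by (rule G_borel)
    have qlim: "(\<lambda>n. (h (r + inverse (real (Suc n))) - h r) / inverse (real (Suc n))) \<longlonglongrightarrow> D"
      if "(h has_real_derivative D) (at r)" for r D
    proof -
      have lim: "(\<lambda>k. (h (r + k) - h r) / k) \<midarrow>0\<rightarrow> D" using that[unfolded DERIV_def] .
      have all: "\<forall>S. (\<forall>n. S n \<noteq> 0) \<and> S \<longlonglongrightarrow> 0 \<longrightarrow> (\<lambda>n. (h (r + S n) - h r) / S n) \<longlonglongrightarrow> D"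
        using LIMSEQ_SEQ_conv[of 0 "\<lambda>k. (h (r + k) - h r) / k" D, THEN iffD2, OF lim] .
      have Sc: "(\<forall>n. inverse (real (Suc n)) \<noteq> 0) \<and> (\<lambda>n. inverse (real (Suc n))) \<longlonglongrightarrow> 0"
        using LIMSEQ_inverse_real_of_nat by simp
      show ?thesis using all[rule_format, OF Sc] .
    qed
    have C0G: "C0 \<subseteq> G"
    proof
      fix r assume "r \<in> C0"
      then obtain D where r: "r \<in> {s<..<t}" "(h has_real_derivative D) (at r)" "D \<le> q"
        unfolding C0_def by auto
      have "\<exists>m. \<forall>n\<ge>m. (h (r + inverse (real (Suc n))) - h r) / inverse (real (Suc n)) \<le> q + inverse (real (Suc k))" for k
      proof -
        have "0 < inverse (real (Suc k))" by simp
        then have "D < q + inverse (real (Suc k))" using r(3) by linarith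
        from order_tendstoD(2)[OF qlim[OF r(2)] this]
        show ?thesis unfolding eventually_sequentially by (auto intro: less_imp_le)
      qed
      then show "r \<in> G" using r(1) unfolding G_def by auto
    qed
    have GC0: "G - C0 \<subseteq> N"
    proof
      fix r assume rG: "r \<in> G - C0"
      show "r \<in> N"
      proof (rule ccontr)
        assume "r \<notin> N"
        then obtain D where D: "(h has_real_derivative D) (at r)" using rG unfolding N_def G_def by auto
        have "D \<le> q + inverse (real (Suc k))" for k
          using rG LIMSEQ_le_const2[OF qlim[OF D]] unfolding G_def by auto
        then have "D \<le> q"
        proof -
          assume all: "\<And>k. D \<le> q + inverse (real (Suc k))"
          show "D \<le> q"
          proof (rule ccontr)
            assume "\<not> D \<le> q"
            then obtain k where "inverse (real (Suc k)) < D - q" using reals_Archimedean[of "D - q"] by auto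
            with all[of k] show False by simp
          qed
        qed
        then have "r \<in> C0" using rG D unfolding C0_def G_def by auto
        with rG show False by simp
      qed
    qed
    have C0sets: "C0 \<in> sets lebesgue"
    proof (rule sets_negligible_symdiff[of G])
      show "G \<in> sets lebesgue" using Gb by (rule borel_imp_lebesgue)
      have "(G - C0) \<union> (C0 - G) \<subseteq> N" using GC0 C0G by auto
      then show "negligible ((G - C0) \<union> (C0 - G))" using negN negligible_subset by blast
    qed
    have Csplit: "C = C0 \<union> (C \<inter> {s, t})" using C_mid unfolding C_def by auto
    have Csets: "C \<in> sets lebesgue"
    proof -
      have "negligible (C \<inter> {s, t})" by (rule countable_negligible) auto
      then have "C \<inter> {s, t} \<in> sets lebesgue" by (rule negligible_imp_sets)
      then show ?thesis using C0sets by (subst Csplit) (rule sets.Un)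
    qed
    have C0lm: "C0 \<in> lmeasurable"
    proof (rule bounded_set_imp_lmeasurable)
      have "C0 \<subseteq> {s..t}" unfolding C0_def by auto
      then show "bounded C0" by (rule bounded_subset[OF compact_imp_bounded[OF compact_Icc]])
    qed (rule C0sets)
    define N' where "N' = N \<union> (B - W)"
    have negN': "negligible N'" unfolding N'_def W_def using negN CB(4) by (rule negligible_Un)
    have cover: "{s<..<t} \<subseteq> (C0 \<union> W) \<union> N'"
    proof
      fix r assume r: "r \<in> {s<..<t}"
      show "r \<in> (C0 \<union> W) \<union> N'"
      proof (cases "\<exists>D. (h has_real_derivative D) (at r)")
        case True
        then obtain D where D: "(h has_real_derivative D) (at r)" by auto
        show ?thesis
        proof (cases "D \<le> q")
          case True then show ?thesis using r D unfolding C0_def by auto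
        next
          case False then have "r \<in> B" using r D unfolding B_def by auto
          then show ?thesis unfolding N'_def by auto
        qed
      next
        case False then show ?thesis using r unfolding N_def N'_def by auto
      qed
    qed
    have ioo: "measure lebesgue {s<..<t} = t - s"
      using st by (simp add: measure_def borel_eq_lebesgue)
    have "t - s \<le> measure lebesgue ((C0 \<union> W) \<union> N')"
    proof -
      have "(C0 \<union> W) \<union> N' \<in> lmeasurable"
        using fmeasurable.Un[OF fmeasurable.Un[OF C0lm Wlm] negligible_imp_measurable[OF negN']] .
      then show ?thesis unfolding ioo[symmetric]
        using cover by (intro measure_mono_fmeasurable) auto
    qed
    also have "\<dots> = measure lebesgue (C0 \<union> W)"
      using C0lm Wlm negN' by (intro measure_Un_null_set) (auto simp: fmeasurable_def negligible_iff_null_sets)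
    also have "\<dots> \<le> measure lebesgue C0 + measure lebesgue W"
      using C0lm Wlm by (intro measure_Un_le) (auto simp: fmeasurable_def)
    finally have "(1 - \<epsilon>) * (t - s) \<le> measure lebesgue C0" using mW by (simp add: algebra_simps)
    then have "ennreal ((1 - \<epsilon>) * (t - s)) \<le> emeasure lebesgue C0"
      using C0lm by (simp add: emeasure_eq_measure2 ennreal_leI)
    also have "\<dots> \<le> emeasure lebesgue C"
    proof -
      have "C0 \<subseteq> C" using C_mid by blast
      then show ?thesis using Csets by (rule emeasure_mono)
    qed
    finally have "ennreal ((1 - \<epsilon>) * (t - s)) \<le> emeasure lebesgue C" .
    then show "let C = {r\<in>{s..t}. \<exists>D. (g has_real_derivative D) (at r within {0..1}) \<and> D \<ge> \<tau>}
            in C \<in> sets lebesgue \<and> emeasure lebesgue C \<ge> ennreal ((1 - \<epsilon>) * (t - s))"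
      using Csets unfolding C_def Let_def by simp
  qed
qed

end
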